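(* For each $n\in\mathbb N$ let $X_n=\{x_1^n,x_2^n\}$ be a two-point set with metric $d_n(x_1^n,x_2^n)=n$, and put $\alpha_n=\tfrac12$ if $n$ is even, $\alpha_n=\tfrac13$ if $n$ is odd. Define $M_n(x_i^n,x_j^n,0)=0$ and, for $t>0$, $M_n(x_i^n,x_j^n,t)=\alpha_n$ if $t\le d_n(x_i^n,x_j^n)$ and $M_n(x_i^n,x_j^n,t)=1$ if $t>d_n(x_i^n,x_j^n)$. Then each $(X_n,M_n,\cdot)$ (product $t$-norm) is a compact non-Archimedean fuzzy metric space, and the sequence $\{(X_n,M_n,\cdot)\}_n$ satisfies: (1) the constant function $C(s)=\tfrac13$ satisfies $0<C(s)\le\mathrm{diam}_s(X_n)$ for all $s>0$, $n\in\mathbb N$; (2) $\mathrm{Cov}(X_n,\varepsilon,t)\le 2$ for all $t>0$, $0<\varepsilon<1$, $n$; (3) for $t=\tfrac12$ and any $n,m$ with $n=2m$ and any $s$ with $m<s<n$, one has $M_n(x_1^n,x_2^n,s)<M_m(x_1^m,x_2^m,s)$ but $\dfrac{M_n(x_1^n,x_2^n,s)}{M_m(x_1^m,x_2^m,s)}<\dfrac{M_n(x_1^n,x_2^n,t)}{M_m(x_1^m,x_2^m,t)}$; and (4) $\{(X_n,M_n,\cdot)\}_n$ has no subsequence that is Cauchy with respect to $M_{GH}$.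
   Context: A fuzzy metric space $(X,M,\cdot)$ with the product $t$-norm: $M:X\times X\times[0,\infty)\to[0,1]$ with, for all $x,y,z$ and $t,s>0$: (KM1) $M(x,y,0)=0$; (KM2) $M(x,y,t)=1$ for all $t>0$ iff $x=y$; (KM3) symmetry; (KM4) $M(x,y,t)\cdot M(y,z,s)\le M(x,z,t+s)$; (KM5) $M(x,y,\cdot)$ left continuous on $[0,\infty)$. Non-Archimedean: $M(x,z,\max\{t,s\})\ge M(x,y,t)\cdot M(y,z,s)$. Balls $B(x,\varepsilon,t)=\{y: M(x,y,t)>1-\varepsilon\}$ generate the topology. $H_M(A,B,t)=\min\{\inf_{a\in A}\sup_{b\in B}M(a,b,t),\ \inf_{b\in B}\sup_{a\in A}M(a,b,t)\}$. A fuzzy metric on $X\sqcup Y$ is admissible if it restricts to the given ones on $X$ and $Y$; $M_{GH}(X,Y,t)=\sup\{H_M(X,Y,t): M$ admissible non-Archimedean fuzzy metric on $X\sqcup Y$ with the product $t$-norm$\}$. A sequence $(X_n)$ is Cauchy w.r.t. $M_{GH}$ if for every $t>0$, $0<\varepsilon<1$ there is $n_0$ with $M_{GH}(X_n,X_m,t)>1-\varepsilon$ for all $n,m\ge n_0$. $\mathrm{Cov}(X,\varepsilon,t)$ is the minimal cardinality of $C\subseteq X$ with $X=\bigcup_{c\in C}B(c,\varepsilon,t)$; $\mathrm{diam}_s(X)=\inf\{M(x,y,s):x,y\in X\}$. *)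

theory Defs
  imports Complex_Main "HOL-Library.Extended_Nat"
begin

type_synonym 'a fuzzy = "'a \<Rightarrow> 'a \<Rightarrow> real \<Rightarrow> real"

text \<open>Kramosil--Michalek fuzzy metric with the product t-norm on the carrier X.\<close>
definition fuzzy_metric :: "'a set \<Rightarrow> 'a fuzzy \<Rightarrow> bool" where
  "fuzzy_metric X M \<longleftrightarrow>
     (\<forall>x\<in>X. \<forall>y\<in>X. \<forall>t\<ge>0. 0 \<le> M x y t \<and> M x y t \<le> 1)
   \<and> (\<forall>x\<in>X. \<forall>y\<in>X. M x y 0 = 0)
   \<and> (\<forall>x\<in>X. \<forall>y\<in>X. (\<forall>t>0. M x y t = 1) \<longleftrightarrow> x = y)
   \<and> (\<forall>x\<in>X. \<forall>y\<in>X. \<forall>t. M x y t = M y x t)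
   \<and> (\<forall>x\<in>X. \<forall>y\<in>X. \<forall>z\<in>X. \<forall>t>0. \<forall>s>0. M x y t * M y z s \<le> M x z (t + s))
   \<and> (\<forall>x\<in>X. \<forall>y\<in>X. \<forall>t>0. (M x y \<longlongrightarrow> M x y t) (at_left t))"

definition fm_non_arch :: "'a set \<Rightarrow> 'a fuzzy \<Rightarrow> bool" where
  "fm_non_arch X M \<longleftrightarrow>
     (\<forall>x\<in>X. \<forall>y\<in>X. \<forall>z\<in>X. \<forall>t>0. \<forall>s>0. M x y t * M y z s \<le> M x z (max t s))"

definition fm_ball :: "'a set \<Rightarrow> 'a fuzzy \<Rightarrow> 'a \<Rightarrow> real \<Rightarrow> real \<Rightarrow> 'a set" where
  "fm_ball X M x \<epsilon> t = {y\<in>X. M x y t > 1 - \<epsilon>}"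

definition fm_open :: "'a set \<Rightarrow> 'a fuzzy \<Rightarrow> 'a set \<Rightarrow> bool" where
  "fm_open X M U \<longleftrightarrow> U \<subseteq> X \<and>
     (\<forall>x\<in>U. \<exists>\<epsilon> t. 0 < \<epsilon> \<and> \<epsilon> < 1 \<and> 0 < t \<and> fm_ball X M x \<epsilon> t \<subseteq> U)"

definition fm_compact :: "'a set \<Rightarrow> 'a fuzzy \<Rightarrow> bool" where
  "fm_compact X M \<longleftrightarrow>
     (\<forall>\<U>. (\<forall>U\<in>\<U>. fm_open X M U) \<and> X \<subseteq> \<Union>\<U> \<longrightarrow>
        (\<exists>\<F>\<subseteq>\<U>. finite \<F> \<and> X \<subseteq> \<Union>\<F>))"

definition fm_Cov :: "'a set \<Rightarrow> 'a fuzzy \<Rightarrow> real \<Rightarrow> real \<Rightarrow> enat" where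
  "fm_Cov X M \<epsilon> t =
     (INF C\<in>{C. C \<subseteq> X \<and> X = (\<Union>c\<in>C. fm_ball X M c \<epsilon> t)}.
        if finite C then enat (card C) else \<infinity>)"

definition fm_diam :: "'a set \<Rightarrow> 'a fuzzy \<Rightarrow> real \<Rightarrow> real" where
  "fm_diam X M s = (INF p\<in>X \<times> X. M (fst p) (snd p) s)"

definition fm_hausdorff :: "'a fuzzy \<Rightarrow> 'a set \<Rightarrow> 'a set \<Rightarrow> real \<Rightarrow> real" where
  "fm_hausdorff M A B t =
     min (INF a\<in>A. SUP b\<in>B. M a b t) (INF b\<in>B. SUP a\<in>A. M a b t)"

definition fm_admissible ::
  "'a set \<Rightarrow> 'a fuzzy \<Rightarrow> 'b set \<Rightarrow> 'b fuzzy \<Rightarrow> ('a + 'b) fuzzy \<Rightarrow> bool" where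
  "fm_admissible X MX Y MY M \<longleftrightarrow>
     fuzzy_metric (Inl ` X \<union> Inr ` Y) M \<and> fm_non_arch (Inl ` X \<union> Inr ` Y) M
   \<and> (\<forall>a\<in>X. \<forall>b\<in>X. \<forall>t\<ge>0. M (Inl a) (Inl b) t = MX a b t)
   \<and> (\<forall>a\<in>Y. \<forall>b\<in>Y. \<forall>t\<ge>0. M (Inr a) (Inr b) t = MY a b t)"

text \<open>Supremum taken in [0,1] (so the empty supremum is 0).\<close>
definition M_GH :: "'a set \<Rightarrow> 'a fuzzy \<Rightarrow> 'b set \<Rightarrow> 'b fuzzy \<Rightarrow> real \<Rightarrow> real" where
  "M_GH X MX Y MY t =
     Sup (insert 0 {fm_hausdorff M (Inl ` X) (Inr ` Y) t | M. fm_admissible X MX Y MY M})"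

definition GH_Cauchy :: "(nat \<Rightarrow> 'a set \<times> 'a fuzzy) \<Rightarrow> bool" where
  "GH_Cauchy S \<longleftrightarrow>
     (\<forall>t>0. \<forall>\<epsilon>. 0 < \<epsilon> \<and> \<epsilon> < 1 \<longrightarrow>
        (\<exists>n0. \<forall>n\<ge>n0. \<forall>m\<ge>n0.
           M_GH (fst (S n)) (snd (S n)) (fst (S m)) (snd (S m)) t > 1 - \<epsilon>))"

text \<open>The example: X_n = {x_1^n, x_2^n} represented as {1,2}, d_n(x_1,x_2) = n.\<close>
definition alpha :: "nat \<Rightarrow> real" where
  "alpha n = (if even n then 1/2 else 1/3)"

definition Xn :: "nat \<Rightarrow> nat set" where
  "Xn n = {1, 2}"

definition dn :: "nat \<Rightarrow> nat \<Rightarrow> nat \<Rightarrow> real" where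
  "dn n i j = (if i = j then 0 else real n)"

definition Mn :: "nat \<Rightarrow> nat fuzzy" where
  "Mn n i j t = (if t \<le> 0 then 0 else if t \<le> dn n i j then alpha n else 1)"

end

theory Submission imports Defs begin

lemma Mn_simp: "i \<in> {1,2} \<Longrightarrow> j \<in> {1,2} \<Longrightarrow> t > 0 \<Longrightarrow>
  Mn n i j t = (if i = j then 1 else if t \<le> real n then alpha n else 1)"
  by (auto simp: Mn_def dn_def)

lemma alpha_bounds: "0 < alpha n" "alpha n \<le> 1/2" "alpha n \<ge> 1/3"
  by (auto simp: alpha_def)

lemma alpha_sq: "alpha n * alpha n \<le> 1"
  by (auto simp: alpha_def)

lemma Mn_mono: "0 < t \<Longrightarrow> t \<le> s \<Longrightarrow> Mn n i j t \<le> Mn n i j s"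
  using alpha_bounds[of n] by (auto simp: Mn_def dn_def)

lemma Mn_range: "0 \<le> Mn n i j t" "Mn n i j t \<le> 1"
  using alpha_bounds[of n] by (auto simp: Mn_def dn_def)

lemma fm: assumes "n \<ge> 1" shows "fuzzy_metric (Xn n) (Mn n)"
  unfolding fuzzy_metric_def
proof (intro conjI ballI allI impI)
  fix x y t assume "x \<in> Xn n" "y \<in> Xn n"
  show "0 \<le> Mn n x y t" "Mn n x y t \<le> 1" by (rule Mn_range)+
  show "Mn n x y 0 = 0" by (simp add: Mn_def)
  show "Mn n x y t = Mn n y x t" by (simp add: Mn_def dn_def)
next
  fix x y assume "x \<in> Xn n" "y \<in> Xn n"
  show "(\<forall>t>0. Mn n x y t = 1) = (x = y)"
  proof
    assume "\<forall>t>0. Mn n x y t = 1"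
    then have "Mn n x y 1 = 1" by simp
    then show "x = y" using assms alpha_bounds[of n] by (auto simp: Mn_def dn_def split: if_splits)
  qed (simp add: Mn_def dn_def)
next
  fix x y z t s assume "x \<in> Xn n" "y \<in> Xn n" "z \<in> Xn n" and ts: "(t::real) > 0" "(s::real) > 0"
  have one: "Mn n w w r = 1" if "r > 0" for w r using that by (simp add: Mn_def dn_def)
  have p1: "Mn n x y t * Mn n y z s \<le> 1"
    using Mn_range[of n x y t] Mn_range[of n y z s] by (simp add: mult_le_one)
  consider "x = z" | "y = x" | "y = z" using \<open>x \<in> Xn n\<close> \<open>y \<in> Xn n\<close> \<open>z \<in> Xn n\<close>
    by (auto simp: Xn_def)
  then show "Mn n x y t * Mn n y z s \<le> Mn n x z (t + s)"
  proof cases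
    case 1 then show ?thesis using p1 one[of "t+s" z] ts by simp
  next
    case 2 then show ?thesis using one[of s y] one[of t y] ts Mn_mono[of s "t+s" n y z] by simp
  next
    case 3 then show ?thesis using one[of s y] ts Mn_mono[of t "t+s" n x y] by simp
  qed
next
  fix x y t assume "x \<in> Xn n" "y \<in> Xn n" "(t::real) > 0"
  show "(Mn n x y \<longlongrightarrow> Mn n x y t) (at_left t)"
  proof (rule tendsto_eventually)
    show "\<forall>\<^sub>F u in at_left t. Mn n x y u = Mn n x y t"
    proof (cases "t \<le> dn n x y")
      case True
      have "\<forall>\<^sub>F u in at_left t. u \<in> {0<..<t}" using \<open>t>0\<close> by (rule eventually_at_left_real)
      then show ?thesis
        by eventually_elim (use True \<open>t>0\<close> in \<open>auto simp: Mn_def\<close>)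
    next
      case False
      have "max 0 (dn n x y) < t" using False \<open>t>0\<close> by simp
      then have "\<forall>\<^sub>F u in at_left t. u \<in> {max 0 (dn n x y)<..<t}" by (rule eventually_at_left_real)
      then show ?thesis
        by eventually_elim (use False \<open>t>0\<close> in \<open>auto simp: Mn_def\<close>)
    qed
  qed
qed

lemma na: "fm_non_arch (Xn n) (Mn n)"
  unfolding fm_non_arch_def
  using alpha_bounds[of n] alpha_sq[of n] by (auto simp: Xn_def Mn_def dn_def max_def)

lemma cpt: "fm_compact (Xn n) (Mn n)"
  unfolding fm_compact_def
proof (intro allI impI)
  fix U assume "(\<forall>U\<in>U. fm_open (Xn n) (Mn n) U) \<and> Xn n \<subseteq> \<Union> U"
  then obtain A B where "A \<in> U" "1 \<in> A" "B \<in> U" "2 \<in> B" by (auto simp: Xn_def)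
  then show "\<exists>F\<subseteq>U. finite F \<and> Xn n \<subseteq> \<Union> F"
    by (intro exI[of _ "{A,B}"]) (auto simp: Xn_def)
qed

lemma diam: "s > 0 \<Longrightarrow> 1/3 \<le> fm_diam (Xn n) (Mn n) s"
  unfolding fm_diam_def
proof (rule cINF_greatest)
  show "Xn n \<times> Xn n \<noteq> {}" by (simp add: Xn_def)
  fix p assume "s > 0" "p \<in> Xn n \<times> Xn n"
  then show "1/3 \<le> Mn n (fst p) (snd p) s"
    using alpha_bounds[of n] by (auto simp: Mn_def dn_def)
qed

lemma cov: "0 < t \<Longrightarrow> 0 < e \<Longrightarrow> fm_Cov (Xn n) (Mn n) e t \<le> 2"
proof -
  assume "0 < t" "0 < e"
  have self: "c \<in> fm_ball (Xn n) (Mn n) c e t" if "c \<in> Xn n" for c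
    using that \<open>0<t\<close> \<open>0<e\<close> by (simp add: fm_ball_def Mn_def dn_def)
  have sub: "fm_ball (Xn n) (Mn n) c e t \<subseteq> Xn n" for c
    by (simp add: fm_ball_def)
  have "Xn n = (\<Union>c\<in>Xn n. fm_ball (Xn n) (Mn n) c e t)"
    using self sub by blast
  then have "Xn n \<in> {C. C \<subseteq> Xn n \<and> Xn n = (\<Union>c\<in>C. fm_ball (Xn n) (Mn n) c e t)}"
    by blast
  then have "fm_Cov (Xn n) (Mn n) e t \<le> (if finite (Xn n) then enat (card (Xn n)) else \<infinity>)"
    unfolding fm_Cov_def by (rule INF_lower)
  moreover have "card (Xn n) = 2" by (simp add: Xn_def)
  moreover have "finite (Xn n)" by (simp add: Xn_def)
  ultimately show ?thesis by (simp add: numeral_eq_enat)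
qed

lemma fm_refl: assumes "fuzzy_metric X M" "x \<in> X" "t > 0" shows "M x x t = 1"
proof -
  have "\<forall>x\<in>X. \<forall>y\<in>X. (\<forall>t>0. M x y t = 1) \<longleftrightarrow> x = y"
    using assms(1) unfolding fuzzy_metric_def by (elim conjE) assumption
  then have "(\<forall>t>0. M x x t = 1)" using assms(2) by blast
  then show ?thesis using assms(3) by blast
qed

lemma fm_sym: assumes "fuzzy_metric X M" "x \<in> X" "y \<in> X" shows "M x y t = M y x t"
proof -
  have "\<forall>x\<in>X. \<forall>y\<in>X. \<forall>t. M x y t = M y x t"
    using assms(1) unfolding fuzzy_metric_def by (elim conjE) assumption
  then show ?thesis using assms(2,3) by blast
qed

lemma na_inst: "fm_non_arch X M \<Longrightarrow> x \<in> X \<Longrightarrow> y \<in> X \<Longrightarrow> z \<in> X \<Longrightarrow> t > 0 \<Longrightarrow> s > 0 \<Longrightarrow>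
  M x y t * M y z s \<le> M x z (max t s)"
  unfolding fm_non_arch_def by blast

lemma key:
  assumes adm: "fm_admissible (Xn a) (Mn a) (Xn b) (Mn b) M" and ab: "a < b" "1 \<le> a"
  shows "fm_hausdorff M (Inl ` Xn a) (Inr ` Xn b) 1 \<le> 3/4"
proof (rule ccontr)
  let ?S = "Inl ` Xn a \<union> Inr ` Xn b"
  assume "\<not> ?thesis"
  then have H: "(INF y\<in>Inr ` Xn b. SUP x\<in>Inl ` Xn a. M x y 1) > 3/4"
    unfolding fm_hausdorff_def by simp
  have fmM: "fuzzy_metric ?S M" and naM: "fm_non_arch ?S M"
    and rA: "\<forall>p\<in>Xn a. \<forall>q\<in>Xn a. \<forall>t\<ge>0. M (Inl p) (Inl q) t = Mn a p q t"
    and rB: "\<forall>p\<in>Xn b. \<forall>q\<in>Xn b. \<forall>t\<ge>0. M (Inr p) (Inr q) t = Mn b p q t"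
    using adm unfolding fm_admissible_def by blast+
  have near: "\<exists>p\<in>Xn a. M (Inl p) (Inr y) b > 3/4" if y: "y \<in> Xn b" for y
  proof -
    have H2: "min (max (M (Inl 1) (Inr 1) 1) (M (Inl 2) (Inr 1) 1)) (max (M (Inl 1) (Inr 2) 1) (M (Inl 2) (Inr 2) 1)) > 3/4"
      using H by (simp add: Xn_def Sup_insert_finite Inf_insert_finite sup_max inf_min)
    obtain p where p: "p \<in> Xn a" "M (Inl p) (Inr y) 1 > 3/4"
    proof -
      consider "y = 1" | "y = 2" using y by (auto simp: Xn_def)
      then show ?thesis
      proof cases
        case 1
        then show ?thesis using H2 that unfolding Xn_def by (cases "M (Inl 1) (Inr 1) 1 \<le> M (Inl 2) (Inr 1) 1") auto
      next
        case 2
        then show ?thesis using H2 that unfolding Xn_def by (cases "M (Inl 1) (Inr 2) 1 \<le> M (Inl 2) (Inr 2) 1") auto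
      qed
    qed
    have "M (Inl p) (Inr y) 1 * M (Inr y) (Inr y) b \<le> M (Inl p) (Inr y) (max 1 (real b))"
      using p y ab by (intro na_inst[OF naM]) auto
    moreover have "M (Inr y) (Inr y) b = 1" using fm_refl[OF fmM, of "Inr y" b] y ab by simp
    moreover have "max 1 (real b) = b" using ab by simp
    ultimately have "M (Inl p) (Inr y) 1 \<le> M (Inl p) (Inr y) b" by simp
    then have "M (Inl p) (Inr y) b > 3/4" using p by linarith
    then show ?thesis using p(1) by blast
  qed
  obtain p where p: "p \<in> Xn a" "M (Inl p) (Inr 1) b > 3/4" using near[of 1] by (auto simp: Xn_def)
  obtain q where q: "q \<in> Xn a" "M (Inl q) (Inr 2) b > 3/4" using near[of 2] by (auto simp: Xn_def)
  have bpos: "(0::real) < b" using ab by simp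
  have sym: "M (Inr 1) (Inl p) b = M (Inl p) (Inr 1) b" using fm_sym[OF fmM, of "Inr 1" "Inl p" b] p by (simp add: Xn_def)
  have "M (Inl p) (Inl q) b = Mn a p q b" using rA p q ab by simp
  also have "\<dots> = 1" using ab by (simp add: Mn_def dn_def)
  finally have pq: "M (Inl p) (Inl q) b = 1" .
  have "M (Inr 1) (Inl p) b * M (Inl p) (Inl q) b \<le> M (Inr 1) (Inl q) (max (real b) (real b))"
    using p q bpos by (intro na_inst[OF naM]) (auto simp: Xn_def)
  then have s1: "M (Inl p) (Inr 1) b \<le> M (Inr 1) (Inl q) b" using sym pq by simp
  have "M (Inr 1) (Inl q) b * M (Inl q) (Inr 2) b \<le> M (Inr 1) (Inr 2) (max (real b) (real b))"
    using q bpos by (intro na_inst[OF naM]) (auto simp: Xn_def)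
  moreover have "M (Inr 1) (Inr 2) b = Mn b 1 2 b" using rB bpos by (simp add: Xn_def)
  moreover have "Mn b 1 2 b = alpha b" using bpos by (simp add: Mn_def dn_def)
  ultimately have "M (Inr 1) (Inl q) b * M (Inl q) (Inr 2) b \<le> 1/2" using alpha_bounds[of b] by simp
  moreover have "(3/4) * (3/4) < M (Inr 1) (Inl q) b * M (Inl q) (Inr 2) b"
    using s1 p q by (intro mult_strict_mono) auto
  ultimately show False by simp
qed

lemma part4: "\<forall>n m (s::real). 1 \<le> m \<and> n = 2 * m \<and> real m < s \<and> s < real n \<longrightarrow>
          Mn n 1 2 s < Mn m 1 2 s \<and> Mn n 1 2 s / Mn m 1 2 s < Mn n 1 2 (1/2) / Mn m 1 2 (1/2)"
proof (intro allI impI)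
  fix n m :: nat and s :: real
  assume h: "1 \<le> m \<and> n = 2 * m \<and> real m < s \<and> s < real n"
  have an: "alpha n = 1/2" using h by (simp add: alpha_def)
  have e1: "Mn n 1 2 s = 1/2" using h an by (simp add: Mn_def dn_def)
  have e2: "Mn m 1 2 s = 1" using h by (simp add: Mn_def dn_def)
  have e3: "Mn n 1 2 (1/2) = 1/2" using h an by (simp add: Mn_def dn_def)
  have e4: "Mn m 1 2 (1/2) = alpha m" using h by (simp add: Mn_def dn_def)
  have am: "0 < alpha m" "alpha m < 1" using alpha_bounds[of m] by auto
  have ineq: "(1/2::real) / 1 < (1/2) / alpha m"
    using am by (intro divide_strict_left_mono) auto
  show "Mn n 1 2 s < Mn m 1 2 s \<and> Mn n 1 2 s / Mn m 1 2 s < Mn n 1 2 (1/2) / Mn m 1 2 (1/2)"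
    unfolding e1 e2 e3 e4 using ineq by simp
qed

lemma MGH_le: "a < b \<Longrightarrow> 1 \<le> a \<Longrightarrow> M_GH (Xn a) (Mn a) (Xn b) (Mn b) 1 \<le> 3/4"
  unfolding M_GH_def
proof (rule cSup_least)
  assume "a < b" "1 \<le> a"
  fix x assume "x \<in> insert 0 {fm_hausdorff M (Inl ` Xn a) (Inr ` Xn b) 1 |M. fm_admissible (Xn a) (Mn a) (Xn b) (Mn b) M}"
  then consider "x = 0" | M where "x = fm_hausdorff M (Inl ` Xn a) (Inr ` Xn b) 1" "fm_admissible (Xn a) (Mn a) (Xn b) (Mn b) M"
    by blast
  then show "x \<le> 3/4"
  proof cases
    case 1 then show ?thesis by simp
  next
    case 2 then show ?thesis using key[OF 2(2) \<open>a < b\<close> \<open>1 \<le> a\<close>] by simp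
  qed
qed simp

lemma no_cauchy: "\<not> (\<exists>\<phi>::nat \<Rightarrow> nat. strict_mono \<phi> \<and> (\<forall>k. 1 \<le> \<phi> k) \<and>
          GH_Cauchy (\<lambda>k. (Xn (\<phi> k), Mn (\<phi> k))))"
proof
  assume "\<exists>\<phi>::nat \<Rightarrow> nat. strict_mono \<phi> \<and> (\<forall>k. 1 \<le> \<phi> k) \<and>
          GH_Cauchy (\<lambda>k. (Xn (\<phi> k), Mn (\<phi> k)))"
  then obtain \<phi> :: "nat \<Rightarrow> nat" where sm: "strict_mono \<phi>" and ge: "\<forall>k. 1 \<le> \<phi> k"
    and C: "GH_Cauchy (\<lambda>k. (Xn (\<phi> k), Mn (\<phi> k)))" by blast
  obtain n0 where n0: "\<forall>n\<ge>n0. \<forall>m\<ge>n0. M_GH (Xn (\<phi> n)) (Mn (\<phi> n)) (Xn (\<phi> m)) (Mn (\<phi> m)) 1 > 1 - 1/4"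
    using C[unfolded GH_Cauchy_def, rule_format, of 1 "1/4"] by auto
  have "M_GH (Xn (\<phi> n0)) (Mn (\<phi> n0)) (Xn (\<phi> (Suc n0))) (Mn (\<phi> (Suc n0))) 1 > 1 - 1/4"
    using n0 by auto
  moreover have "M_GH (Xn (\<phi> n0)) (Mn (\<phi> n0)) (Xn (\<phi> (Suc n0))) (Mn (\<phi> (Suc n0))) 1 \<le> 3/4"
    using sm ge by (intro MGH_le) (auto simp: strict_mono_def)
  ultimately show False by simp
qed


theorem mainTheorem9:
  shows "(\<forall>n\<ge>1. fuzzy_metric (Xn n) (Mn n) \<and> fm_non_arch (Xn n) (Mn n) \<and> fm_compact (Xn n) (Mn n))
   \<and> (let C = (\<lambda>s::real. 1/3::real) in
        \<forall>s>0. \<forall>n\<ge>1. 0 < C s \<and> C s \<le> fm_diam (Xn n) (Mn n) s)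
   \<and> (\<forall>t>0. \<forall>\<epsilon>. 0 < \<epsilon> \<and> \<epsilon> < 1 \<longrightarrow> (\<forall>n\<ge>1. fm_Cov (Xn n) (Mn n) \<epsilon> t \<le> 2))
   \<and> (let t = (1/2::real) in
        \<forall>n m (s::real). 1 \<le> m \<and> n = 2 * m \<and> real m < s \<and> s < real n \<longrightarrow>
          Mn n 1 2 s < Mn m 1 2 s \<and> Mn n 1 2 s / Mn m 1 2 s < Mn n 1 2 t / Mn m 1 2 t)
   \<and> \<not> (\<exists>\<phi>::nat \<Rightarrow> nat. strict_mono \<phi> \<and> (\<forall>k. 1 \<le> \<phi> k) \<and>
          GH_Cauchy (\<lambda>k. (Xn (\<phi> k), Mn (\<phi> k))))"
proof (intro conjI)
  show "\<forall>n\<ge>1. fuzzy_metric (Xn n) (Mn n) \<and> fm_non_arch (Xn n) (Mn n) \<and> fm_compact (Xn n) (Mn n)"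
    using fm na cpt by blast
  show "let C = (\<lambda>s::real. 1/3::real) in \<forall>s>0. \<forall>n\<ge>1. 0 < C s \<and> C s \<le> fm_diam (Xn n) (Mn n) s"
    using diam by simp
  show "\<forall>t>0. \<forall>\<epsilon>. 0 < \<epsilon> \<and> \<epsilon> < 1 \<longrightarrow> (\<forall>n\<ge>1. fm_Cov (Xn n) (Mn n) \<epsilon> t \<le> 2)"
    using cov by blast
  show "let t = (1/2::real) in
        \<forall>n m (s::real). 1 \<le> m \<and> n = 2 * m \<and> real m < s \<and> s < real n \<longrightarrow>
          Mn n 1 2 s < Mn m 1 2 s \<and> Mn n 1 2 s / Mn m 1 2 s < Mn n 1 2 t / Mn m 1 2 t"
    unfolding Let_def using part4 by blast
qed (rule no_cauchy)

end
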